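(* There are infinitely many connected graphs $G$ with $\omega(G)<\chi(G)$ for which $\overline{\mathrm{scs}}(G)=n-2$, where $n$ is the order of $G$.
   Context: All graphs are finite and simple; $\omega(G)$ is the clique number. For a graph $G=(V,E)$ with $k=\chi(G)$, a proper $k$-colouring is a map $c:V\to[k]$ with $c(u)\neq c(v)$ for every edge $uv$. A set $S\subseteq V$ is a determining set for $(G,c)$ if there is no proper $k$-colouring $c'\neq c$ with $c'(s)=c(s)$ for all $s\in S$; a critical set is an inclusion-minimal determining set. $\mathrm{scs}(G,c)$ is the size of a smallest critical set for $(G,c)$, and $\overline{\mathrm{scs}}(G)$ is the maximum of $\mathrm{scs}(G,c)$ over all proper $\chi(G)$-colourings $c$ of $G$. *)

theory Defs
  imports Main
begin

definition simple_graph :: "nat \<Rightarrow> (nat \<Rightarrow> nat \<Rightarrow> bool) \<Rightarrow> bool" where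
  "simple_graph n E \<longleftrightarrow> (\<forall>u v. E u v \<longrightarrow> u < n \<and> v < n \<and> u \<noteq> v \<and> E v u)"

definition connected_graph :: "nat \<Rightarrow> (nat \<Rightarrow> nat \<Rightarrow> bool) \<Rightarrow> bool" where
  "connected_graph n E \<longleftrightarrow> 0 < n \<and> (\<forall>u<n. \<forall>v<n. E\<^sup>*\<^sup>* u v)"

definition is_clique :: "nat \<Rightarrow> (nat \<Rightarrow> nat \<Rightarrow> bool) \<Rightarrow> nat set \<Rightarrow> bool" where
  "is_clique n E K \<longleftrightarrow> K \<subseteq> {0..<n} \<and> (\<forall>u\<in>K. \<forall>v\<in>K. u \<noteq> v \<longrightarrow> E u v)"

definition clique_number :: "nat \<Rightarrow> (nat \<Rightarrow> nat \<Rightarrow> bool) \<Rightarrow> nat" where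
  "clique_number n E = Max {card K | K. is_clique n E K}"

text \<open>A proper k-colouring c : V \<rightarrow> [k] = {1..k}. Only the values on vertices matter.\<close>
definition proper_colouring :: "nat \<Rightarrow> (nat \<Rightarrow> nat \<Rightarrow> bool) \<Rightarrow> nat \<Rightarrow> (nat \<Rightarrow> nat) \<Rightarrow> bool" where
  "proper_colouring n E k c \<longleftrightarrow> (\<forall>v<n. c v \<in> {1..k}) \<and> (\<forall>u v. E u v \<longrightarrow> c u \<noteq> c v)"

definition chromatic_number :: "nat \<Rightarrow> (nat \<Rightarrow> nat \<Rightarrow> bool) \<Rightarrow> nat" where
  "chromatic_number n E = (LEAST k. \<exists>c. proper_colouring n E k c)"

definition determining_set :: "nat \<Rightarrow> (nat \<Rightarrow> nat \<Rightarrow> bool) \<Rightarrow> (nat \<Rightarrow> nat) \<Rightarrow> nat set \<Rightarrow> bool" where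
  "determining_set n E c S \<longleftrightarrow> S \<subseteq> {0..<n} \<and>
     \<not> (\<exists>c'. proper_colouring n E (chromatic_number n E) c' \<and> (\<exists>v<n. c' v \<noteq> c v)
            \<and> (\<forall>s\<in>S. c' s = c s))"

definition critical_set :: "nat \<Rightarrow> (nat \<Rightarrow> nat \<Rightarrow> bool) \<Rightarrow> (nat \<Rightarrow> nat) \<Rightarrow> nat set \<Rightarrow> bool" where
  "critical_set n E c S \<longleftrightarrow> determining_set n E c S \<and> (\<forall>T. T \<subset> S \<longrightarrow> \<not> determining_set n E c T)"

definition scs :: "nat \<Rightarrow> (nat \<Rightarrow> nat \<Rightarrow> bool) \<Rightarrow> (nat \<Rightarrow> nat) \<Rightarrow> nat" where
  "scs n E c = Min {card S | S. critical_set n E c S}"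

definition scs_bar :: "nat \<Rightarrow> (nat \<Rightarrow> nat \<Rightarrow> bool) \<Rightarrow> nat" where
  "scs_bar n E = Max {scs n E c | c. proper_colouring n E (chromatic_number n E) c}"

end

theory Submission
  imports Defs
begin

definition cyc :: "nat \<Rightarrow> nat \<Rightarrow> bool" where
  "cyc u v \<longleftrightarrow> (u=0 \<and> v=1) \<or> (u=1 \<and> v=2) \<or> (u=2 \<and> v=3) \<or> (u=3 \<and> v=4) \<or> (u=4 \<and> v=0)"

definition G :: "nat \<Rightarrow> nat \<Rightarrow> nat \<Rightarrow> bool" where
  "G n u v \<longleftrightarrow> cyc u v \<or> cyc v u \<or> (u=0 \<and> 5\<le>v \<and> v<n) \<or> (v=0 \<and> 5\<le>u \<and> u<n)"

definition c0 :: "nat \<Rightarrow> nat" where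
  "c0 v = (if v=0 then 3 else if v=2 \<or> v=4 then 2 else 1)"

lemma G_simple: "5 \<le> n \<Longrightarrow> simple_graph n (G n)"
  unfolding simple_graph_def G_def cyc_def by auto

lemma G_conn: assumes "5 \<le> n" shows "connected_graph n (G n)"
proof -
  have e: "G n 0 1" "G n 1 2" "G n 0 4" "G n 4 3" "G n 1 0" "G n 2 1" "G n 4 0" "G n 3 4"
    unfolding G_def cyc_def by auto
  have a: "(G n)\<^sup>*\<^sup>* 0 v" if "v < n" for v
  proof -
    consider "v=0" | "v=1" | "v=2" | "v=3" | "v=4" | "5 \<le> v" by linarith
    then show ?thesis
    proof cases
      case 6 then have "G n 0 v" using that unfolding G_def by auto
      then show ?thesis by auto
    qed (use e in \<open>auto intro: rtranclp.rtrancl_into_rtrancl\<close>)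
  qed
  have b: "(G n)\<^sup>*\<^sup>* v 0" if "v < n" for v
  proof -
    consider "v=0" | "v=1" | "v=2" | "v=3" | "v=4" | "5 \<le> v" by linarith
    then show ?thesis
    proof cases
      case 6 then have "G n v 0" using that unfolding G_def by auto
      then show ?thesis by auto
    qed (use e in \<open>auto intro: converse_rtranclp_into_rtranclp\<close>)
  qed
  show ?thesis unfolding connected_graph_def using assms a b
    by (meson rtranclp_trans less_le_trans zero_less_numeral)
qed

lemma G_tri: "G n x y \<Longrightarrow> G n y z \<Longrightarrow> G n x z \<Longrightarrow> False"
  unfolding G_def cyc_def by (elim disjE conjE; simp)

lemma G_clique: assumes "5 \<le> n" shows "clique_number n (G n) = 2"
proof -
  have le: "card K \<le> 2" if "is_clique n (G n) K" for K
  proof (rule ccontr)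
    assume "\<not> card K \<le> 2"
    have fin: "finite K" using that unfolding is_clique_def by (meson finite_atLeastLessThan finite_subset)
    have "K \<noteq> {}" using \<open>\<not> card K \<le> 2\<close> by auto
    then obtain x where x: "x \<in> K" by auto
    have "card (K - {x}) \<ge> 2" using \<open>\<not> card K \<le> 2\<close> x fin by (simp add: card_Diff_singleton)
    then have "K - {x} \<noteq> {}" by (metis card.empty not_numeral_le_zero)
    then obtain y where y: "y \<in> K" "y \<noteq> x" by auto
    have "card (K - {x,y}) \<ge> 1" using \<open>\<not> card K \<le> 2\<close> x y fin
      by (simp add: card_Diff_subset)
    then have "K - {x,y} \<noteq> {}" by (metis card.empty not_one_le_zero)
    then obtain z where z: "z \<in> K" "z \<noteq> x" "z \<noteq> y" by auto
    have "G n x y" "G n y z" "G n x z" using that x y z unfolding is_clique_def by auto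
    then show False using G_tri by blast
  qed
  have cl: "is_clique n (G n) {0,1}" using assms unfolding is_clique_def G_def cyc_def by auto
  have fin: "finite {card K | K. is_clique n (G n) K}"
    by (rule finite_subset[of _ "{..2}"]) (use le in auto)
  show ?thesis unfolding clique_number_def
    apply (rule Max_eqI[OF fin])
    using le cl by force+
qed

lemma c0_proper: "5 \<le> n \<Longrightarrow> proper_colouring n (G n) 3 c0"
  unfolding proper_colouring_def G_def cyc_def c0_def by auto

lemma G_chrom: assumes "5 \<le> n" shows "chromatic_number n (G n) = 3"
  unfolding chromatic_number_def
proof (rule Least_equality)
  show "\<exists>c. proper_colouring n (G n) 3 c" using c0_proper assms by blast
next
  fix k assume "\<exists>c. proper_colouring n (G n) k c"
  then obtain c where c: "proper_colouring n (G n) k c" by blast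
  show "3 \<le> k"
  proof (rule ccontr)
    assume "\<not> 3 \<le> k"
    have r: "c i \<in> {1..k}" if "i < 5" for i using c that assms unfolding proper_colouring_def by auto
    have d: "c 0 \<noteq> c 1" "c 1 \<noteq> c 2" "c 2 \<noteq> c 3" "c 3 \<noteq> c 4" "c 4 \<noteq> c 0"
      using c unfolding proper_colouring_def G_def cyc_def by auto
    have "c 0 \<in> {1..k}" "c 1 \<in> {1..k}" "c 2 \<in> {1..k}" "c 3 \<in> {1..k}" "c 4 \<in> {1..k}"
      using r by auto
    then show False using d \<open>\<not> 3 \<le> k\<close> by auto
  qed
qed

lemma det_two:
  assumes sg: "simple_graph n E" and ch: "chromatic_number n E = 3"
    and pc: "proper_colouring n E 3 c"
    and a: "a < n" and b: "b < n"
    and "E a p" "E a q" "p \<notin> {a,b}" "q \<notin> {a,b}" "c p \<noteq> c q"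
    and "E b r" "E b s" "r \<notin> {a,b}" "s \<notin> {a,b}" "c r \<noteq> c s"
  shows "determining_set n E c ({0..<n} - {a,b})"
  unfolding determining_set_def ch
proof (intro conjI notI)
  show "{0..<n} - {a, b} \<subseteq> {0..<n}" by auto
next
  assume "\<exists>c'. proper_colouring n E 3 c' \<and> (\<exists>v<n. c' v \<noteq> c v) \<and> (\<forall>s\<in>{0..<n} - {a, b}. c' s = c s)"
  then obtain c' v where c': "proper_colouring n E 3 c'" "v < n" "c' v \<noteq> c v"
    "\<forall>s\<in>{0..<n} - {a, b}. c' s = c s" by blast
  have key: "c' x = c x" if "x < n" "E x p'" "E x q'" "p' \<notin> {a,b}" "q' \<notin> {a,b}" "c p' \<noteq> c q'" for x p' q'
  proof -
    have "p' < n" "q' < n" using sg that unfolding simple_graph_def by auto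
    then have "c' p' = c p'" "c' q' = c q'" using c'(4) that by auto
    moreover have "c' x \<noteq> c' p'" "c' x \<noteq> c' q'" "c x \<noteq> c p'" "c x \<noteq> c q'"
      using c'(1) pc that unfolding proper_colouring_def by auto
    moreover have "c' x \<in> {1..3}" "c x \<in> {1..3}" "c p' \<in> {1..3}" "c q' \<in> {1..3}"
      using c'(1) pc that \<open>p' < n\<close> \<open>q' < n\<close> unfolding proper_colouring_def by auto
    ultimately show ?thesis using that(6) by auto
  qed
  have "c' a = c a" using key assms by blast
  moreover have "c' b = c b" using key assms by blast
  ultimately show False using c' by auto
qed

lemma crit_exists:
  "finite D \<Longrightarrow> determining_set n E c D \<Longrightarrow> \<exists>S \<subseteq> D. critical_set n E c S"
proof (induction "card D" arbitrary: D rule: less_induct)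
  case less
  show ?case
  proof (cases "critical_set n E c D")
    case True then show ?thesis by blast
  next
    case False
    then obtain T where T: "T \<subset> D" "determining_set n E c T"
      using less.prems unfolding critical_set_def by blast
    have "card T < card D" using T less.prems psubset_card_mono by blast
    then obtain S where "S \<subseteq> T" "critical_set n E c S"
      using less.hyps[of T] T less.prems by (meson finite_subset psubset_imp_subset)
    then show ?thesis using T by blast
  qed
qed

lemma c5_pairs:
  fixes x0 x1 x2 x3 x4 :: nat
  assumes "x0 \<in> {1..3}" "x1 \<in> {1..3}" "x2 \<in> {1..3}" "x3 \<in> {1..3}" "x4 \<in> {1..3}"
    "x0 \<noteq> x1" "x1 \<noteq> x2" "x2 \<noteq> x3" "x3 \<noteq> x4" "x4 \<noteq> x0"
  shows "(x1 \<noteq> x4 \<and> x1 \<noteq> x3) \<or> (x0 \<noteq> x2 \<and> x2 \<noteq> x4) \<or> (x1 \<noteq> x3 \<and> x3 \<noteq> x0)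
    \<or> (x2 \<noteq> x4 \<and> x1 \<noteq> x4) \<or> (x3 \<noteq> x0 \<and> x0 \<noteq> x2)"
proof -
  have "x0 = 1 \<or> x0 = 2 \<or> x0 = 3" "x1 = 1 \<or> x1 = 2 \<or> x1 = 3" "x2 = 1 \<or> x2 = 2 \<or> x2 = 3"
    "x3 = 1 \<or> x3 = 2 \<or> x3 = 3" "x4 = 1 \<or> x4 = 2 \<or> x4 = 3" using assms by auto
  then show ?thesis using assms(6-10) by auto
qed

lemma ub:
  assumes n: "5 \<le> n" and pc: "proper_colouring n (G n) 3 c"
  shows "\<exists>S. critical_set n (G n) c S \<and> card S \<le> n - 2"
proof -
  have sg: "simple_graph n (G n)" using G_simple n .
  have ch: "chromatic_number n (G n) = 3" using G_chrom n .
  have r: "c i \<in> {1..3}" if "i < 5" for i using pc that n unfolding proper_colouring_def by auto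
  have d: "c 0 \<noteq> c 1" "c 1 \<noteq> c 2" "c 2 \<noteq> c 3" "c 3 \<noteq> c 4" "c 4 \<noteq> c 0"
    using pc unfolding proper_colouring_def G_def cyc_def by auto
  have e: "G n 0 1" "G n 1 2" "G n 2 3" "G n 3 4" "G n 4 0"
     "G n 1 0" "G n 2 1" "G n 3 2" "G n 4 3" "G n 0 4"
    unfolding G_def cyc_def by auto
  have "\<exists>a b. a < n \<and> b < n \<and> a \<noteq> b \<and> determining_set n (G n) c ({0..<n} - {a,b})"
  proof -
    from c5_pairs[OF r[of 0] r[of 1] r[of 2] r[of 3] r[of 4] d]
    consider "c 1 \<noteq> c 4 \<and> c 1 \<noteq> c 3" | "c 0 \<noteq> c 2 \<and> c 2 \<noteq> c 4" | "c 1 \<noteq> c 3 \<and> c 3 \<noteq> c 0"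
      | "c 2 \<noteq> c 4 \<and> c 1 \<noteq> c 4" | "c 3 \<noteq> c 0 \<and> c 0 \<noteq> c 2" by auto
    then show ?thesis
    proof cases
      case 1
      have "determining_set n (G n) c ({0..<n} - {0,2})"
        by (rule det_two[OF sg ch pc, of 0 2 1 4 1 3]) (use n e 1 in auto)
      then show ?thesis using n by (intro exI[of _ 0] exI[of _ 2]) auto
    next
      case 2
      have "determining_set n (G n) c ({0..<n} - {1,3})"
        by (rule det_two[OF sg ch pc, of 1 3 0 2 2 4]) (use n e 2 in auto)
      then show ?thesis using n by (intro exI[of _ 1] exI[of _ 3]) auto
    next
      case 3
      have "determining_set n (G n) c ({0..<n} - {2,4})"
        by (rule det_two[OF sg ch pc, of 2 4 1 3 3 0]) (use n e 3 in auto)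
      then show ?thesis using n by (intro exI[of _ 2] exI[of _ 4]) auto
    next
      case 4
      have "determining_set n (G n) c ({0..<n} - {3,0})"
        by (rule det_two[OF sg ch pc, of 3 0 2 4 1 4]) (use n e 4 in auto)
      then show ?thesis using n by (intro exI[of _ 3] exI[of _ 0]) auto
    next
      case 5
      have "determining_set n (G n) c ({0..<n} - {4,1})"
        by (rule det_two[OF sg ch pc, of 4 1 3 0 0 2]) (use n e 5 in auto)
      then show ?thesis using n by (intro exI[of _ 4] exI[of _ 1]) auto
    qed
  qed
  then obtain a b where ab: "a < n" "b < n" "a \<noteq> b" "determining_set n (G n) c ({0..<n} - {a,b})"
    by blast
  have cd: "card ({0..<n} - {a,b}) = n - 2" using ab by (simp add: card_Diff_subset)
  obtain S where "S \<subseteq> {0..<n} - {a,b}" "critical_set n (G n) c S"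
    using crit_exists[OF _ ab(4)] by blast
  moreover then have "card S \<le> n - 2" using cd by (metis card_mono finite_Diff finite_atLeastLessThan)
  ultimately show ?thesis by blast
qed

lemma lb:
  assumes n: "5 \<le> n" and D: "determining_set n (G n) c0 S"
  shows "n - 2 \<le> card S"
proof -
  have ch: "chromatic_number n (G n) = 3" using G_chrom n .
  have Sn: "S \<subseteq> {0..<n}" using D unfolding determining_set_def by auto
  have nd: "\<not> (\<exists>c'. proper_colouring n (G n) 3 c' \<and> (\<exists>v<n. c' v \<noteq> c0 v) \<and> (\<forall>s\<in>S. c' s = c0 s))"
    using D unfolding determining_set_def ch by auto
  have leaves: "{5..<n} \<subseteq> S"
  proof
    fix l assume l: "l \<in> {5..<n}"
    show "l \<in> S"
    proof (rule ccontr)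
      assume "l \<notin> S"
      have "proper_colouring n (G n) 3 (c0(l:=2))"
        using l unfolding proper_colouring_def G_def cyc_def c0_def by auto
      moreover have "(c0(l:=2)) l \<noteq> c0 l" using l by (simp add: c0_def)
      moreover have "\<forall>s\<in>S. (c0(l:=2)) s = c0 s" using \<open>l \<notin> S\<close> by auto
      moreover have "l < n" using l by auto
      ultimately show False using nd by blast
    qed
  qed
  have s2: "2 \<in> S"
  proof (rule ccontr)
    assume "2 \<notin> S"
    have "proper_colouring n (G n) 3 (c0(2:=3))"
      using n unfolding proper_colouring_def G_def cyc_def c0_def by auto
    moreover have "(c0(2:=3)) 2 \<noteq> c0 2" by (simp add: c0_def)
    moreover have "\<forall>s\<in>S. (c0(2:=3)) s = c0 s" using \<open>2 \<notin> S\<close> by auto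
    moreover have "(2::nat) < n" using n by simp
    ultimately show False using nd by blast
  qed
  have s3: "3 \<in> S"
  proof (rule ccontr)
    assume "3 \<notin> S"
    have "proper_colouring n (G n) 3 (c0(3:=3))"
      using n unfolding proper_colouring_def G_def cyc_def c0_def by auto
    moreover have "(c0(3:=3)) 3 \<noteq> c0 3" by (simp add: c0_def)
    moreover have "\<forall>s\<in>S. (c0(3:=3)) s = c0 s" using \<open>3 \<notin> S\<close> by auto
    moreover have "(3::nat) < n" using n by simp
    ultimately show False using nd by blast
  qed
  have s04: "\<exists>x\<in>{0,4}. x \<in> S"
  proof (rule ccontr)
    assume "\<not> (\<exists>x\<in>{0,4}. x \<in> S)"
    then have "0 \<notin> S" "4 \<notin> S" by auto
    have "proper_colouring n (G n) 3 (c0(0:=2, 4:=3))"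
      using n unfolding proper_colouring_def G_def cyc_def c0_def by auto
    moreover have "(c0(0:=2, 4:=3)) 0 \<noteq> c0 0" by (simp add: c0_def)
    moreover have "\<forall>s\<in>S. (c0(0:=2, 4:=3)) s = c0 s" using \<open>0 \<notin> S\<close> \<open>4 \<notin> S\<close> by auto
    moreover have "(0::nat) < n" using n by simp
    ultimately show False using nd by blast
  qed
  then obtain x where x: "x \<in> {0,4}" "x \<in> S" by blast
  have sub: "{5..<n} \<union> {2,3,x} \<subseteq> S" using leaves s2 s3 x by auto
  have "card ({5..<n} \<union> {2,3,x}) = (n - 5) + 3" using x
    by (subst card_Un_disjoint) auto
  moreover have "finite S" using Sn finite_subset by blast
  ultimately show ?thesis using card_mono[OF _ sub] by simp
qed

lemma scs_le:
  assumes n: "5 \<le> n" and pc: "proper_colouring n (G n) 3 c"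
  shows "scs n (G n) c \<le> n - 2"
proof -
  obtain S where S: "critical_set n (G n) c S" "card S \<le> n - 2" using ub[OF n pc] by blast
  have fin: "finite {card S | S. critical_set n (G n) c S}"
  proof (rule finite_subset[of _ "{..n}"])
    show "{card S | S. critical_set n (G n) c S} \<subseteq> {..n}"
    proof
      fix m assume "m \<in> {card S | S. critical_set n (G n) c S}"
      then obtain T where "m = card T" "T \<subseteq> {0..<n}"
        unfolding critical_set_def determining_set_def by blast
      then show "m \<in> {..n}" using card_mono[of "{0..<n}" T] by auto
    qed
  qed auto
  have "Min {card S | S. critical_set n (G n) c S} \<le> card S"
    using S(1) fin by (intro Min_le) auto
  then show ?thesis using S(2) unfolding scs_def by simp
qed

lemma scs_c0:
  assumes n: "5 \<le> n"
  shows "scs n (G n) c0 = n - 2"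
proof -
  obtain S where S: "critical_set n (G n) c0 S" "card S \<le> n - 2" using ub[OF n c0_proper[OF n]] by blast
  have "scs n (G n) c0 \<le> n - 2" using scs_le[OF n c0_proper[OF n]] .
  moreover have "scs n (G n) c0 \<in> {card S | S. critical_set n (G n) c0 S}"
    unfolding scs_def
  proof (rule Min_in)
    show "finite {card S | S. critical_set n (G n) c0 S}"
    proof (rule finite_subset[of _ "{..n}"])
      show "{card S | S. critical_set n (G n) c0 S} \<subseteq> {..n}"
      proof
        fix m assume "m \<in> {card S | S. critical_set n (G n) c0 S}"
        then obtain T where "m = card T" "T \<subseteq> {0..<n}"
          unfolding critical_set_def determining_set_def by blast
        then show "m \<in> {..n}" using card_mono[of "{0..<n}" T] by auto
      qed
    qed auto
  qed (use S in auto)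
  then have "n - 2 \<le> scs n (G n) c0" using lb[OF n] unfolding critical_set_def by auto
  ultimately show ?thesis by simp
qed

lemma scs_bar_G:
  assumes n: "5 \<le> n"
  shows "scs_bar n (G n) = n - 2"
  unfolding scs_bar_def G_chrom[OF n]
proof (rule Max_eqI)
  show "finite {scs n (G n) c | c. proper_colouring n (G n) 3 c}"
    by (rule finite_subset[of _ "{..n-2}"]) (use scs_le[OF n] in auto)
next
  fix y assume "y \<in> {scs n (G n) c | c. proper_colouring n (G n) 3 c}"
  then show "y \<le> n - 2" using scs_le[OF n] by auto
next
  show "n - 2 \<in> {scs n (G n) c | c. proper_colouring n (G n) 3 c}"
    using scs_c0[OF n] c0_proper[OF n] by force
qed

theorem proposition1:
  shows "\<forall>N::nat. \<exists>n E. N \<le> n \<and> simple_graph n E \<and> connected_graph n E \<and>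
           clique_number n E < chromatic_number n E \<and> scs_bar n E = n - 2"
proof
  fix N :: nat
  let ?n = "N + 5"
  have n: "5 \<le> ?n" by simp
  show "\<exists>n E. N \<le> n \<and> simple_graph n E \<and> connected_graph n E \<and>
           clique_number n E < chromatic_number n E \<and> scs_bar n E = n - 2"
    using G_simple[OF n] G_conn[OF n] G_clique[OF n] G_chrom[OF n] scs_bar_G[OF n]
    by (intro exI[of _ ?n] exI[of _ "G ?n"]) auto
qed

end
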